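(* Let $X$ and $Y$ be random variables such that $Y$ is absolutely continuous with a bounded density $f$, and set $M:=\sup_{y\in\mathbb R}|f(y)|$. Let $1\le p<\infty$, and assume $X$ and $Y$ have finite $p$th absolute moments. Then $$d_{KS}(X,Y)\le (p+1)^{1/(p+1)}\big(M\,d_p(X,Y)\big)^{p/(p+1)}.$$
   Context: $d_{KS}(X,Y):=\sup_{x\in\mathbb R}|P(X\le x)-P(Y\le x)|$ is the Kolmogorov–Smirnov distance. $d_p(X,Y):=\min\|X'-Y'\|_p$, the minimum taken over all couplings $(X',Y')$ with $X'\stackrel{d}{=}X$ and $Y'\stackrel{d}{=}Y$. *)

theory Defs
  imports "HOL-Probability.Probability"
begin

definition law :: "'a measure \<Rightarrow> ('a \<Rightarrow> real) \<Rightarrow> real measure" where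
  "law M X = distr M borel X"

definition d_KS :: "'a measure \<Rightarrow> ('a \<Rightarrow> real) \<Rightarrow> ('a \<Rightarrow> real) \<Rightarrow> real" where
  "d_KS M X Y = (SUP x::real. \<bar>prob_space.prob M {\<omega>\<in>space M. X \<omega> \<le> x}
                              - prob_space.prob M {\<omega>\<in>space M. Y \<omega> \<le> x}\<bar>)"

text \<open>Couplings of two laws: probability measures on R x R with the given marginals.
  A coupling (X',Y') is identified with its joint law.\<close>
definition couplings :: "real measure \<Rightarrow> real measure \<Rightarrow> (real \<times> real) measure set" where
  "couplings \<mu> \<nu> = {\<pi>. prob_space \<pi> \<and> sets \<pi> = sets (borel :: (real \<times> real) measure)
                        \<and> distr \<pi> borel fst = \<mu> \<and> distr \<pi> borel snd = \<nu>}"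

text \<open>Wasserstein p-distance: d_p = inf over couplings of (E|X'-Y'|^p)^(1/p).
  The p-th moment is taken as a nonnegative (ennreal) integral, so no integrability
  side conditions are hidden.\<close>
definition d_p :: "real \<Rightarrow> 'a measure \<Rightarrow> ('a \<Rightarrow> real) \<Rightarrow> ('a \<Rightarrow> real) \<Rightarrow> real" where
  "d_p p M X Y = (enn2real (INF \<pi>\<in>couplings (law M X) (law M Y).
        \<integral>\<^sup>+ z. ennreal (\<bar>fst z - snd z\<bar> powr p) \<partial>\<pi>)) powr (1 / p)"

end

theory Submission
  imports Defs
begin


lemma intA:
  fixes c p :: real
  assumes c: "0 \<le> c" and p: "0 \<le> p"
  shows "(\<integral>\<^sup>+u. ennreal (indicator {0..c} u * (c powr p - u powr p)) \<partial>lborel)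
         = ennreal (c powr (p+1) * p / (p+1))"
proof -
  have h1: "((\<lambda>u. u powr p) has_integral (c powr (p+1) / (p+1))) {0..c}"
    using has_integral_powr_from_0[of p c] c p by simp
  have h2: "((\<lambda>u. c powr p) has_integral (c * c powr p)) {0..c}"
    using has_integral_const_real[of "c powr p" 0 c] c by simp
  have "c * c powr p = c powr (p+1)"
    using c by (cases "c = 0") (auto simp: powr_add)
  then have h3: "((\<lambda>u. c powr p - u powr p) has_integral (c powr (p+1) * p / (p+1))) {0..c}"
    using has_integral_diff[OF h2 h1] p by (simp add: field_simps)
  have h4: "((\<lambda>u. indicator {0..c} u * (c powr p - u powr p)) has_integral (c powr (p+1) * p / (p+1))) UNIV"
  proof -
    have e: "(\<lambda>u. indicator {0..c} u * (c powr p - u powr p)) = (\<lambda>u. if u \<in> {0..c} then c powr p - u powr p else 0)"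
      by (auto simp: fun_eq_iff)
    show ?thesis unfolding e has_integral_restrict_UNIV by (rule h3)
  qed
  have nn: "0 \<le> indicator {0..c} u * (c powr p - u powr p)" for u :: real
    using p by (auto simp: indicator_def intro: powr_mono2)
  show ?thesis
    by (rule nn_integral_has_integral_lborel[OF _ nn h4]) measurable
qed



lemma bathtub:
  fixes \<pi> :: "(real \<times> real) measure" and f :: "real \<Rightarrow> real"
  assumes fin: "finite_measure \<pi>"
    and sets: "sets \<pi> = sets (borel :: (real \<times> real) measure)"
    and fm: "(\<lambda>y. ennreal (f y)) \<in> borel_measurable lborel"
    and dens: "distr \<pi> borel snd = density lborel (\<lambda>y. ennreal (f y))"
    and fb: "\<And>y. f y \<le> Mf" and Mf: "0 < Mf"
    and s: "s = 1 \<or> s = (-1::real)" and p: "0 \<le> p"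
    and B: "B \<in> sets \<pi>" and BT: "\<And>z. z \<in> B \<Longrightarrow> 0 \<le> s * (snd z - x)"
  shows "ennreal (measure \<pi> B powr (p+1) / ((p+1) * Mf powr p))
         \<le> (\<integral>\<^sup>+z. ennreal (indicator B z * (s * (snd z - x)) powr p) \<partial>\<pi>)"
proof -
  interpret finite_measure \<pi> by (rule fin)
  define m where "m = measure \<pi> B"
  define c where "c = m / Mf"
  have m0: "0 \<le> m" unfolding m_def by simp
  have c0: "0 \<le> c" unfolding c_def using m0 Mf by simp
  define h where "h y = indicator {0..c} (s * (y - x)) * (c powr p - (s * (y - x)) powr p)" for y
  have hnn: "0 \<le> h y" for y
    using p by (auto simp: h_def indicator_def intro: powr_mono2)
  have [measurable]: "h \<in> borel_measurable borel" unfolding h_def by measurable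
  have Bb[measurable]: "B \<in> sets borel" using B sets by simp
  have mcong: "g \<in> borel_measurable \<pi>" if "g \<in> borel_measurable borel" for g :: "real \<times> real \<Rightarrow> real"
    using that measurable_cong_sets[OF sets refl] by blast
  have pw: "c powr p * indicator B z \<le> indicator B z * (s * (snd z - x)) powr p + h (snd z)" for z
  proof (cases "z \<in> B")
    case True
    then have T: "0 \<le> s * (snd z - x)" by (rule BT)
    show ?thesis
    proof (cases "s * (snd z - x) \<le> c")
      case True
      then show ?thesis using T \<open>z \<in> B\<close> by (simp add: h_def indicator_def)
    next
      case False
      then have "c powr p \<le> (s * (snd z - x)) powr p" using c0 p by (intro powr_mono2) auto
      then show ?thesis using \<open>z \<in> B\<close> hnn[of "snd z"] by simp
    qed
  next
    case False
    then show ?thesis using hnn[of "snd z"] by simp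
  qed
  have hb[measurable]: "h \<in> borel_measurable lborel"
    using measurable_cong_sets[OF sets_lborel refl] \<open>h \<in> borel_measurable borel\<close> by blast
  have hbe[measurable]: "(\<lambda>y. ennreal (h y)) \<in> borel_measurable lborel" using hb by measurable
  have hbe'[measurable]: "(\<lambda>y. ennreal (h y)) \<in> borel_measurable borel" by measurable
  have snb[measurable]: "snd \<in> borel_measurable (borel :: (real \<times> real) measure)"
    by (rule borel_measurable_continuous_onI, rule continuous_on_snd, rule continuous_on_id)
  have sm: "snd \<in> borel_measurable \<pi>"
    by (rule mcong, rule borel_measurable_continuous_onI, rule continuous_on_snd, rule continuous_on_id)
  have "(\<integral>\<^sup>+z. ennreal (h (snd z)) \<partial>\<pi>) = (\<integral>\<^sup>+y. ennreal (h y) \<partial>distr \<pi> borel snd)"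
    by (rule nn_integral_distr[symmetric, OF sm]) measurable
  also have "\<dots> = (\<integral>\<^sup>+y. ennreal (f y) * ennreal (h y) \<partial>lborel)"
    unfolding dens by (rule nn_integral_density[OF fm hbe])
  also have "\<dots> \<le> (\<integral>\<^sup>+y. ennreal Mf * ennreal (h y) \<partial>lborel)"
    by (intro nn_integral_mono mult_right_mono) (auto simp: fb ennreal_leI)
  also have "\<dots> = ennreal Mf * (\<integral>\<^sup>+y. ennreal (h y) \<partial>lborel)"
    by (rule nn_integral_cmult) measurable
  also have "(\<integral>\<^sup>+y. ennreal (h y) \<partial>lborel)
      = (\<integral>\<^sup>+u. ennreal (indicator {0..c} u * (c powr p - u powr p)) \<partial>lborel)"
  proof -
    have s0: "s \<noteq> 0" "\<bar>s\<bar> = 1" "s * s = 1" using s by auto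
    have "(\<integral>\<^sup>+y. ennreal (h y) \<partial>lborel) = ennreal \<bar>s\<bar> * (\<integral>\<^sup>+u. ennreal (h (x + s * u)) \<partial>lborel)"
      by (rule nn_integral_real_affine) (use s0 in simp_all)
    also have "\<dots> = (\<integral>\<^sup>+u. ennreal (indicator {0..c} u * (c powr p - u powr p)) \<partial>lborel)"
      using s0 by (simp add: h_def mult.assoc[symmetric])
    finally show ?thesis .
  qed
  also have "\<dots> = ennreal (c powr (p+1) * p / (p+1))"
    by (rule intA[OF c0 p])
  finally have hI0: "(\<integral>\<^sup>+z. ennreal (h (snd z)) \<partial>\<pi>) \<le> ennreal Mf * ennreal (c powr (p+1) * p / (p+1))" .
  have hI: "(\<integral>\<^sup>+z. ennreal (h (snd z)) \<partial>\<pi>) \<le> ennreal (Mf * (c powr (p+1) * p / (p+1)))"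
    using hI0 Mf by (subst ennreal_mult') auto
  define K where "K = Mf * (c powr (p+1) * p / (p+1))"
  define L where "L = m powr (p+1) / ((p+1) * Mf powr p)"
  have K0: "0 \<le> K" unfolding K_def using Mf p c0 by simp
  have L0: "0 \<le> L" unfolding L_def using Mf p m0 by simp
  have LK: "c powr p * m = L + K"
  proof (cases "m = 0")
    case True then show ?thesis by (simp add: L_def K_def c_def)
  next
    case False
    then have mp: "0 < m" using m0 by simp
    have cp: "c powr (p+1) = c powr p * c" using mp Mf by (simp add: c_def powr_add)
    have "c powr p * m = m powr (p+1) / Mf powr p"
      using mp Mf by (simp add: c_def powr_divide powr_add)
    moreover have "K = p / (p+1) * (c powr p * m)"
    proof -
      have mc: "Mf * c = m" using Mf by (simp add: c_def)
      have "K = p / (p+1) * (c powr p * (Mf * c))" unfolding K_def cp by (simp add: ac_simps)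
      then show ?thesis unfolding mc .
    qed
    moreover have "m powr (p+1) / Mf powr p = m powr (p+1) / ((p+1) * Mf powr p) + p / (p+1) * (m powr (p+1) / Mf powr p)"
    proof -
      have pp: "p + 1 \<noteq> 0" using p by simp
      have mp0: "Mf powr p \<noteq> 0" using Mf by simp
      have gen: "a / b = a / ((q+1) * b) + q / (q+1) * (a / b)" if "b \<noteq> 0" "q + 1 \<noteq> 0" for a b q :: real
      proof -
        have "a / ((q+1) * b) + q / (q+1) * (a / b) = (a / b) * (1 / (q+1) + q / (q+1))" by (simp add: algebra_simps)
        also have "1 / (q+1) + q / (q+1) = 1" using that(2) by (simp add: add_divide_distrib[symmetric])
        finally show ?thesis by simp
      qed
      show ?thesis by (rule gen[OF mp0 pp])
    qed
    ultimately show ?thesis unfolding L_def by simp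
  qed
  have Tm: "(\<lambda>z. ennreal (indicator B z * (s * (snd z - x)) powr p)) \<in> borel_measurable \<pi>"
  proof -
    have "(\<lambda>z. indicator B z * (s * (snd z - x)) powr p) \<in> borel_measurable borel" by measurable
    then have [measurable]: "(\<lambda>z. indicator B z * (s * (snd z - x)) powr p) \<in> borel_measurable \<pi>" by (rule mcong)
    show ?thesis by measurable
  qed
  have hm: "(\<lambda>z. ennreal (h (snd z))) \<in> borel_measurable \<pi>"
    by (rule measurable_compose[OF sm]) measurable
  have "ennreal (L + K) = ennreal (c powr p) * emeasure \<pi> B"
    by (subst LK[symmetric]) (simp add: ennreal_mult' m_def emeasure_eq_measure)
  also have "\<dots> = (\<integral>\<^sup>+z. ennreal (c powr p) * indicator B z \<partial>\<pi>)"
    by (rule nn_integral_cmult_indicator[OF B, symmetric])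
  also have "\<dots> \<le> (\<integral>\<^sup>+z. ennreal (indicator B z * (s * (snd z - x)) powr p) + ennreal (h (snd z)) \<partial>\<pi>)"
  proof (rule nn_integral_mono)
    fix z
    have "ennreal (c powr p) * indicator B z = ennreal (c powr p * indicator B z)"
      by (simp add: indicator_def)
    also have "\<dots> \<le> ennreal (indicator B z * (s * (snd z - x)) powr p + h (snd z))"
      by (rule ennreal_leI[OF pw])
    also have "\<dots> = ennreal (indicator B z * (s * (snd z - x)) powr p) + ennreal (h (snd z))"
      by (rule ennreal_plus) (auto simp: hnn)
    finally show "ennreal (c powr p) * indicator B z \<le> ennreal (indicator B z * (s * (snd z - x)) powr p) + ennreal (h (snd z))" .
  qed
  also have "\<dots> = (\<integral>\<^sup>+z. ennreal (indicator B z * (s * (snd z - x)) powr p) \<partial>\<pi>) + (\<integral>\<^sup>+z. ennreal (h (snd z)) \<partial>\<pi>)"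
    by (rule nn_integral_add[OF Tm hm])
  also have "\<dots> \<le> (\<integral>\<^sup>+z. ennreal (indicator B z * (s * (snd z - x)) powr p) \<partial>\<pi>) + ennreal K"
    using hI unfolding K_def by (rule add_left_mono)
  finally have "ennreal (L + K) \<le> (\<integral>\<^sup>+z. ennreal (indicator B z * (s * (snd z - x)) powr p) \<partial>\<pi>) + ennreal K" .
  then have "ennreal L + ennreal K \<le> (\<integral>\<^sup>+z. ennreal (indicator B z * (s * (snd z - x)) powr p) \<partial>\<pi>) + ennreal K"
    by (simp only: ennreal_plus[OF L0 K0, symmetric])
  then have "ennreal L \<le> (\<integral>\<^sup>+z. ennreal (indicator B z * (s * (snd z - x)) powr p) \<partial>\<pi>)"
    by simp


  then show ?thesis unfolding L_def m_def .
qed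



lemma fst_bor[measurable]: "fst \<in> borel_measurable (borel :: (real \<times> real) measure)"
  by (rule borel_measurable_continuous_onI, rule continuous_on_fst, rule continuous_on_id)
lemma snd_bor[measurable]: "snd \<in> borel_measurable (borel :: (real \<times> real) measure)"
  by (rule borel_measurable_continuous_onI, rule continuous_on_snd, rule continuous_on_id)

lemma pw_bound:
  fixes a b p :: real assumes p: "0 \<le> p"
  shows "\<bar>a - b\<bar> powr p \<le> 2 powr p * (\<bar>a\<bar> powr p + \<bar>b\<bar> powr p)"
proof -
  have "\<bar>a - b\<bar> \<le> 2 * max \<bar>a\<bar> \<bar>b\<bar>" by simp
  then have "\<bar>a - b\<bar> powr p \<le> (2 * max \<bar>a\<bar> \<bar>b\<bar>) powr p" using p by (intro powr_mono2) auto
  also have "\<dots> = 2 powr p * max \<bar>a\<bar> \<bar>b\<bar> powr p" by (simp add: powr_mult)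
  also have "max \<bar>a\<bar> \<bar>b\<bar> powr p \<le> \<bar>a\<bar> powr p + \<bar>b\<bar> powr p"
    by (cases "\<bar>a\<bar> \<le> \<bar>b\<bar>") (auto simp: max_def)
  finally show ?thesis by simp
qed

lemma final_alg:
  fixes d Mf J p :: real
  assumes d: "0 \<le> d" and Mf: "0 < Mf" and J: "0 \<le> J" and p: "1 \<le> p"
    and le: "d powr (p+1) / ((p+1) * Mf powr p) \<le> J"
  shows "d \<le> (p + 1) powr (1 / (p + 1)) * (Mf * J powr (1 / p)) powr (p / (p + 1))"
proof -
  have pp: "0 < p + 1" using p by simp
  have mp: "0 < Mf powr p" using Mf by simp
  have "d powr (p+1) \<le> (p+1) * Mf powr p * J"
    using le pp mp by (simp add: divide_le_eq mult_ac)
  then have "(d powr (p+1)) powr (1/(p+1)) \<le> ((p+1) * Mf powr p * J) powr (1/(p+1))"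
    using pp d by (intro powr_mono2) auto
  also have "(d powr (p+1)) powr (1/(p+1)) = d"
    using pp d by (simp add: powr_powr)
  also have "((p+1) * Mf powr p * J) powr (1/(p+1))
      = (p+1) powr (1/(p+1)) * (Mf powr p) powr (1/(p+1)) * J powr (1/(p+1))"
    using pp mp J by (simp add: powr_mult)
  also have "(Mf powr p) powr (1/(p+1)) = Mf powr (p/(p+1))"
    by (simp add: powr_powr)
  also have "J powr (1/(p+1)) = (J powr (1/p)) powr (p/(p+1))"
    using p by (simp add: powr_powr)
  also have "(p+1) powr (1/(p+1)) * Mf powr (p/(p+1)) * (J powr (1/p)) powr (p/(p+1))
      = (p + 1) powr (1 / (p + 1)) * (Mf * J powr (1 / p)) powr (p / (p + 1))"
    using Mf by (simp add: powr_mult)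
  finally show ?thesis .
qed

lemma side_bound:
  fixes \<pi> :: "(real \<times> real) measure" and f :: "real \<Rightarrow> real"
  assumes pr: "prob_space \<pi>"
    and sets: "sets \<pi> = sets (borel :: (real \<times> real) measure)"
    and fm: "(\<lambda>y. ennreal (f y)) \<in> borel_measurable lborel"
    and dens: "distr \<pi> borel snd = density lborel (\<lambda>y. ennreal (f y))"
    and fb: "\<And>y. f y \<le> Mf" and Mf: "0 < Mf"
    and s: "s = 1 \<or> s = (-1::real)" and p: "0 \<le> p"
    and B: "B \<in> sets \<pi>" and BT: "\<And>z. z \<in> B \<Longrightarrow> 0 \<le> s * (snd z - x) \<and> s * (snd z - x) \<le> \<bar>fst z - snd z\<bar>"
    and d: "0 \<le> d" "d \<le> measure \<pi> B"
  shows "ennreal (d powr (p+1) / ((p+1) * Mf powr p))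
         \<le> (\<integral>\<^sup>+z. ennreal (\<bar>fst z - snd z\<bar> powr p) \<partial>\<pi>)"
proof -
  interpret prob_space \<pi> by (rule pr)
  have "ennreal (d powr (p+1) / ((p+1) * Mf powr p)) \<le> ennreal (measure \<pi> B powr (p+1) / ((p+1) * Mf powr p))"
    using d p Mf by (intro ennreal_leI divide_right_mono powr_mono2) auto
  also have "\<dots> \<le> (\<integral>\<^sup>+z. ennreal (indicator B z * (s * (snd z - x)) powr p) \<partial>\<pi>)"
    by (rule bathtub[OF finite_measure_axioms sets fm dens fb Mf s p B]) (use BT in blast)
  also have "\<dots> \<le> (\<integral>\<^sup>+z. ennreal (\<bar>fst z - snd z\<bar> powr p) \<partial>\<pi>)"
  proof (rule nn_integral_mono, rule ennreal_leI)
    fix z show "indicator B z * (s * (snd z - x)) powr p \<le> \<bar>fst z - snd z\<bar> powr p"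
      using BT[of z] p by (cases "z \<in> B") (auto intro: powr_mono2)
  qed
  finally show ?thesis .
qed

theorem lemma5p1:
  fixes M :: "'a measure" and X Y :: "'a \<Rightarrow> real" and f :: "real \<Rightarrow> real" and p :: real
  assumes "prob_space M"
    and "X \<in> borel_measurable M"
    and "distributed M lborel Y (\<lambda>y. ennreal (f y))"
    and "bdd_above (range (\<lambda>y. \<bar>f y\<bar>))"
    and "1 \<le> p"
    and "integrable M (\<lambda>\<omega>. \<bar>X \<omega>\<bar> powr p)"
    and "integrable M (\<lambda>\<omega>. \<bar>Y \<omega>\<bar> powr p)"
  shows "d_KS M X Y \<le> (p + 1) powr (1 / (p + 1))
           * ((SUP y. \<bar>f y\<bar>) * d_p p M X Y) powr (p / (p + 1))"
proof -
  interpret P: prob_space M by (rule assms(1))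
  have dY: "distr M lborel Y = density lborel (\<lambda>y. ennreal (f y))"
    and fm: "(\<lambda>y. ennreal (f y)) \<in> borel_measurable lborel"
    and Ym: "Y \<in> measurable M lborel"
    using assms(3) unfolding distributed_def by auto
  have Yb[measurable]: "Y \<in> borel_measurable M" using Ym measurable_cong_sets[OF refl sets_lborel] by blast
  have Xb[measurable]: "X \<in> borel_measurable M" by (rule assms(2))
  have lawY: "law M Y = density lborel (\<lambda>y. ennreal (f y))"
    unfolding law_def dY[symmetric] by (rule distr_cong) auto
  define Mf where "Mf = (SUP y. \<bar>f y\<bar>)"
  have fb: "f y \<le> Mf" for y
  proof -
    have "\<bar>f y\<bar> \<le> Mf" unfolding Mf_def by (rule cSUP_upper[OF UNIV_I assms(4)])
    then show ?thesis by simp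
  qed
  have Mf0: "0 < Mf"
  proof (rule ccontr)
    assume a: "\<not> 0 < Mf"
    have "emeasure (distr M lborel Y) UNIV = 1"
      using Ym by (subst emeasure_distr) (auto simp: P.emeasure_space_1)
    moreover have "emeasure (density lborel (\<lambda>y. ennreal (f y))) UNIV = 0"
    proof -
      have "\<And>y. ennreal (f y) = 0" using fb a by (simp add: ennreal_eq_0_iff) (meson le_less_trans not_le)
      then show ?thesis by (subst emeasure_density[OF fm]) auto
    qed
    ultimately show False using dY by simp
  qed
  define J where "J = (INF \<pi>\<in>couplings (law M X) (law M Y). \<integral>\<^sup>+ z. ennreal (\<bar>fst z - snd z\<bar> powr p) \<partial>\<pi>)"
  have dp: "d_p p M X Y = enn2real J powr (1/p)" by (simp add: d_p_def J_def)
  define \<pi>0 where "\<pi>0 = distr M borel (\<lambda>\<omega>. (X \<omega>, Y \<omega>))"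
  have pXY[measurable]: "(\<lambda>\<omega>. (X \<omega>, Y \<omega>)) \<in> borel_measurable M" by measurable
  have \<pi>0c: "\<pi>0 \<in> couplings (law M X) (law M Y)"
    unfolding couplings_def law_def \<pi>0_def
  proof (intro CollectI conjI)
    show "prob_space (distr M borel (\<lambda>\<omega>. (X \<omega>, Y \<omega>)))" by (rule P.prob_space_distr) measurable
    show "sets (distr M borel (\<lambda>\<omega>. (X \<omega>, Y \<omega>))) = sets borel" by simp
    show "distr (distr M borel (\<lambda>\<omega>. (X \<omega>, Y \<omega>))) borel fst = distr M borel X"
      by (subst distr_distr) (auto simp: comp_def)
    show "distr (distr M borel (\<lambda>\<omega>. (X \<omega>, Y \<omega>))) borel snd = distr M borel Y"
      by (subst distr_distr) (auto simp: comp_def)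
  qed
  have Jfin: "J < \<infinity>"
  proof -
    have "J \<le> (\<integral>\<^sup>+ z. ennreal (\<bar>fst z - snd z\<bar> powr p) \<partial>\<pi>0)"
      unfolding J_def by (rule INF_lower[OF \<pi>0c])
    also have "\<dots> = (\<integral>\<^sup>+ \<omega>. ennreal (\<bar>X \<omega> - Y \<omega>\<bar> powr p) \<partial>M)"
      unfolding \<pi>0_def by (subst nn_integral_distr) auto
    also have "\<dots> \<le> (\<integral>\<^sup>+ \<omega>. ennreal (2 powr p * (\<bar>X \<omega>\<bar> powr p + \<bar>Y \<omega>\<bar> powr p)) \<partial>M)"
      using assms(5) by (intro nn_integral_mono ennreal_leI pw_bound) auto
    also have "\<dots> = ennreal (\<integral> \<omega>. 2 powr p * (\<bar>X \<omega>\<bar> powr p + \<bar>Y \<omega>\<bar> powr p) \<partial>M)"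
      by (rule nn_integral_eq_integral) (use assms(6,7) in auto)
    also have "\<dots> < \<infinity>" by simp
    finally show ?thesis .
  qed
  have key: "\<bar>P.prob {\<omega>\<in>space M. X \<omega> \<le> x} - P.prob {\<omega>\<in>space M. Y \<omega> \<le> x}\<bar>
      \<le> (p + 1) powr (1 / (p + 1)) * (Mf * d_p p M X Y) powr (p / (p + 1))" for x
  proof -
    define d where "d = \<bar>P.prob {\<omega>\<in>space M. X \<omega> \<le> x} - P.prob {\<omega>\<in>space M. Y \<omega> \<le> x}\<bar>"
    have "ennreal (d powr (p+1) / ((p+1) * Mf powr p)) \<le> J"
      unfolding J_def
    proof (rule INF_greatest)
      fix \<pi> assume "\<pi> \<in> couplings (law M X) (law M Y)"
      then have pr: "prob_space \<pi>" and sets: "sets \<pi> = sets (borel :: (real \<times> real) measure)"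
        and mX: "distr \<pi> borel fst = law M X" and mY: "distr \<pi> borel snd = law M Y"
        unfolding couplings_def by auto
      interpret Q: prob_space \<pi> by (rule pr)
      have sp: "space \<pi> = UNIV" using sets_eq_imp_space_eq[OF sets] by simp
      have mc: "A \<in> sets \<pi>" if "A \<in> sets borel" for A using that sets by simp
      have fstm: "fst \<in> measurable \<pi> borel" using measurable_cong_sets[OF sets refl] fst_bor by blast
      have sndm: "snd \<in> measurable \<pi> borel" using measurable_cong_sets[OF sets refl] snd_bor by blast
      have FX: "P.prob {\<omega>\<in>space M. X \<omega> \<le> x} = measure \<pi> {z. fst z \<le> x}"
      proof -
        have "measure \<pi> {z. fst z \<le> x} = measure (distr \<pi> borel fst) {..x}"
          using sp by (subst measure_distr[OF fstm]) (auto intro!: arg_cong[where f="measure \<pi>"])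
        also have "\<dots> = measure (distr M borel X) {..x}" using mX unfolding law_def by simp
        also have "\<dots> = P.prob {\<omega>\<in>space M. X \<omega> \<le> x}"
          by (subst measure_distr) (auto intro!: arg_cong[where f="measure M"])
        finally show ?thesis by simp
      qed
      have FY: "P.prob {\<omega>\<in>space M. Y \<omega> \<le> x} = measure \<pi> {z. snd z \<le> x}"
      proof -
        have "measure \<pi> {z. snd z \<le> x} = measure (distr \<pi> borel snd) {..x}"
          using sp by (subst measure_distr[OF sndm]) (auto intro!: arg_cong[where f="measure \<pi>"])
        also have "\<dots> = measure (distr M borel Y) {..x}" using mY unfolding law_def by simp
        also have "\<dots> = P.prob {\<omega>\<in>space M. Y \<omega> \<le> x}"
          by (subst measure_distr) (auto intro!: arg_cong[where f="measure M"])
        finally show ?thesis by simp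
      qed
      have dens: "distr \<pi> borel snd = density lborel (\<lambda>y. ennreal (f y))" using mY lawY by simp
      have A1: "{z. fst z \<le> x} \<in> sets \<pi>" by (rule mc) measurable
      have A2: "{z. snd z \<le> x} \<in> sets \<pi>" by (rule mc) measurable
      have B1: "{z. fst z \<le> x \<and> x < snd z} \<in> sets \<pi>" by (rule mc) measurable
      have B2: "{z. snd z \<le> x \<and> x < fst z} \<in> sets \<pi>" by (rule mc) measurable
      show "ennreal (d powr (p+1) / ((p+1) * Mf powr p)) \<le> (\<integral>\<^sup>+ z. ennreal (\<bar>fst z - snd z\<bar> powr p) \<partial>\<pi>)"
      proof (cases "measure \<pi> {z. snd z \<le> x} \<le> measure \<pi> {z. fst z \<le> x}")
        case True
        have "measure \<pi> {z. fst z \<le> x} \<le> measure \<pi> ({z. fst z \<le> x \<and> x < snd z} \<union> {z. snd z \<le> x})"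
          by (rule Q.finite_measure_mono) (use B1 A2 in auto)
        also have "\<dots> \<le> measure \<pi> {z. fst z \<le> x \<and> x < snd z} + measure \<pi> {z. snd z \<le> x}"
          by (rule measure_Un_le[OF B1 A2])
        finally have dle: "d \<le> measure \<pi> {z. fst z \<le> x \<and> x < snd z}"
          unfolding d_def FX FY using True by simp
        show ?thesis
          by (rule side_bound[OF pr sets fm dens fb Mf0, of 1 p _ x]) (use assms(5) dle B1 in \<open>auto simp: d_def\<close>)
      next
        case False
        have "measure \<pi> {z. snd z \<le> x} \<le> measure \<pi> ({z. snd z \<le> x \<and> x < fst z} \<union> {z. fst z \<le> x})"
          by (rule Q.finite_measure_mono) (use B2 A1 in auto)
        also have "\<dots> \<le> measure \<pi> {z. snd z \<le> x \<and> x < fst z} + measure \<pi> {z. fst z \<le> x}"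
          by (rule measure_Un_le[OF B2 A1])
        finally have dle: "d \<le> measure \<pi> {z. snd z \<le> x \<and> x < fst z}"
          unfolding d_def FX FY using False by simp
        show ?thesis
          by (rule side_bound[OF pr sets fm dens fb Mf0, of "-1" p _ x]) (use assms(5) dle B2 in \<open>auto simp: d_def\<close>)
      qed
    qed
    then have "enn2real (ennreal (d powr (p+1) / ((p+1) * Mf powr p))) \<le> enn2real J"
      using Jfin by (intro enn2real_mono) auto
    then have "d powr (p+1) / ((p+1) * Mf powr p) \<le> enn2real J"
      using Mf0 assms(5) by simp
    then have "d \<le> (p + 1) powr (1 / (p + 1)) * (Mf * enn2real J powr (1 / p)) powr (p / (p + 1))"
    proof -
      have "0 \<le> enn2real J" by simp
      moreover have "0 \<le> d" by (simp add: d_def)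
      ultimately show "d powr (p+1) / ((p+1) * Mf powr p) \<le> enn2real J \<Longrightarrow> ?thesis"
        using final_alg[OF _ Mf0 _ assms(5)] by blast
    qed
    then show ?thesis unfolding d_def dp .
  qed
  show ?thesis
    unfolding d_KS_def Mf_def[symmetric]
    by (rule cSUP_least) (use key in auto)
qed

end
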